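(* Let $k$ be a positive integer and $y>1$ a real number. If $n$ is a $y$-friable positive integer with $n\le y^{(k+1)/2}$, then $n$ can be factored as $n=b_1b_2\cdots b_k$ with positive integers $b_j$ satisfying $b_j\le y$ for each $1\le j\le k$.
   Context: A positive integer $n$ is $y$-friable if every prime factor of $n$ is at most $y$. *)

theory Defs
  imports Complex_Main "HOL-Computational_Algebra.Primes"
begin

definition friable :: "real \<Rightarrow> nat \<Rightarrow> bool" where
  "friable y n \<longleftrightarrow> n > 0 \<and> (\<forall>p \<in> prime_factors n. real p \<le> y)"

end

theory Submission
  imports Defs
begin

lemma friable_dvd:
  assumes "friable y n" "m dvd n"
  shows "friable y m"
  using assms unfolding friable_def
  by (auto simp: in_prime_factors_iff intro: dvd_trans dvd_pos_nat)

lemma friable_divisor: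
  fixes y :: real
  assumes "y > 1"
  shows "friable y n \<Longrightarrow> real n > y \<Longrightarrow> \<exists>d. d dvd n \<and> sqrt y \<le> real d \<and> real d \<le> y"
proof (induction n rule: less_induct)
  case (less n)
  have npos: "n > 0" using less.prems unfolding friable_def by auto
  have "n \<noteq> 1" using less.prems assms by auto
  then obtain p where p: "prime p" "p dvd n" using prime_factor_nat by blast
  have py: "real p \<le> y" using less.prems(1) p npos unfolding friable_def
    by (auto simp: in_prime_factors_iff)
  show ?case
  proof (cases "sqrt y \<le> real p")
    case True
    then show ?thesis using p py by blast
  next
    case False
    define m where "m = n div p"
    have nm: "n = m * p" using p m_def by simp
    have p1: "p > 1" using p prime_gt_1_nat by blast
    have mlt: "m < n" using nm p1 npos by (simp add: m_def)
    have mdvd: "m dvd n" using nm by simp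
    have fm: "friable y m" using friable_dvd[OF less.prems(1) mdvd] .
    show ?thesis
    proof (cases "real m \<le> y")
      case True
      have "real m * real p > y" using less.prems(2) nm by simp
      moreover have "real p \<le> sqrt y" using False by simp
      ultimately have "real m * sqrt y > y"
        by (meson less_le_trans mult_left_mono of_nat_0_le_iff)
      moreover have "y = sqrt y * sqrt y" using assms by simp
      ultimately have "real m * sqrt y > sqrt y * sqrt y" by linarith
      then have "real m > sqrt y" using assms
        using mult_less_cancel_right_pos[of "sqrt y" "sqrt y" "real m"] by simp
      then show ?thesis using True mdvd by auto
    next
      case f2: False
      then obtain d where "d dvd m" "sqrt y \<le> real d" "real d \<le> y"
        using less.IH[OF mlt fm] by auto
      then show ?thesis using mdvd dvd_trans by blast
    qed
  qed
qed

lemma main: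
  fixes y :: real
  assumes "y > 1"
  shows "friable y n \<Longrightarrow> real n \<le> y powr ((real k + 2) / 2) \<Longrightarrow>
    \<exists>b :: nat \<Rightarrow> nat. n = (\<Prod>j\<in>{1..Suc k}. b j) \<and> (\<forall>j\<in>{1..Suc k}. b j > 0 \<and> real (b j) \<le> y)"
proof (induction k arbitrary: n)
  case 0
  then have "real n \<le> y" using assms by simp
  moreover have "n > 0" using 0 unfolding friable_def by auto
  ultimately show ?case by (intro exI[of _ "\<lambda>_. n"]) auto
next
  case (Suc k)
  have npos: "n > 0" using Suc.prems unfolding friable_def by auto
  show ?case
  proof (cases "real n \<le> y")
    case True
    define b :: "nat \<Rightarrow> nat" where "b = (\<lambda>j. if j = 1 then n else 1)"
    have "(\<Prod>j\<in>{1..Suc (Suc k)}. b j) = n"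
      unfolding b_def by (subst prod.delta) auto
    moreover have "\<forall>j\<in>{1..Suc (Suc k)}. b j > 0 \<and> real (b j) \<le> y"
      using True npos assms unfolding b_def by auto
    ultimately show ?thesis by metis
  next
    case False
    then obtain d where d: "d dvd n" "sqrt y \<le> real d" "real d \<le> y"
      using friable_divisor[OF assms Suc.prems(1)] by force
    define m where "m = n div d"
    have nm: "n = m * d" using d m_def by simp
    have dpos: "d > 0" using d npos by (metis dvd_0_left_iff neq0_conv)
    have fm: "friable y m" using friable_dvd[OF Suc.prems(1)] nm by simp
    have sqpos: "sqrt y > 0" using assms by simp
    have "real m * sqrt y \<le> real m * real d" using d(2) by (simp add: mult_left_mono)
    also have "\<dots> = real n" using nm by simp
    also have "\<dots> \<le> y powr ((real k + 2) / 2 + 1/2)"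
      using Suc.prems(2) by (simp add: field_simps)
    also have "\<dots> = y powr ((real k + 2) / 2) * sqrt y"
      using assms by (simp add: powr_add powr_half_sqrt)
    finally have "real m \<le> y powr ((real k + 2) / 2)" using sqpos by simp
    then obtain b where b: "m = (\<Prod>j\<in>{1..Suc k}. b j)"
      "\<forall>j\<in>{1..Suc k}. b j > 0 \<and> real (b j) \<le> y"
      using Suc.IH fm by blast
    define b' where "b' = b(Suc (Suc k) := d)"
    have "(\<Prod>j\<in>{1..Suc (Suc k)}. b' j) = (\<Prod>j\<in>{1..Suc k}. b' j) * b' (Suc (Suc k))"
      by (simp add: prod.cl_ivl_Suc)
    also have "(\<Prod>j\<in>{1..Suc k}. b' j) = (\<Prod>j\<in>{1..Suc k}. b j)"
      unfolding b'_def by (intro prod.cong) auto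
    finally have "(\<Prod>j\<in>{1..Suc (Suc k)}. b' j) = n" using b nm by (simp add: b'_def)
    moreover have "\<forall>j\<in>{1..Suc (Suc k)}. b' j > 0 \<and> real (b' j) \<le> y"
      using b(2) d dpos unfolding b'_def by (auto simp: le_Suc_eq)
    ultimately show ?thesis by metis
  qed
qed

theorem proposition3p1:
  fixes k n :: nat and y :: real
  assumes "k \<ge> 1" and "y > 1"
    and "friable y n"
    and "real n \<le> y powr ((real k + 1) / 2)"
  shows "\<exists>b :: nat \<Rightarrow> nat. n = (\<Prod>j\<in>{1..k}. b j) \<and>
           (\<forall>j\<in>{1..k}. b j > 0 \<and> real (b j) \<le> y)"
proof -
  obtain k' where k: "k = Suc k'" using assms(1) by (cases k) auto
  have "real n \<le> y powr ((real k' + 2) / 2)" using assms(4) k by (simp add: add_ac)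
  then show ?thesis using main[OF assms(2) assms(3)] k by simp
qed

end
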